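(* Let $(X,G)$ be a minimal continuous action and $m\in\mathbb{N}$, $m\geq 2$. If $(x_1,\dots,x_m)\in Q_m(X,G)$ and $U_1\times\cdots\times U_m$ is an open product neighborhood of $(x_1,\dots,x_m)$ in $X^m$, then $$\bigcap_{i=1}^m N(U_1,U_i)\neq\emptyset.$$
   Context: $G$ is a locally compact topological group acting continuously on a compact metric space $(X,d)$; minimal means every orbit is dense. A tuple $(x_1,\dots,x_m)\in X^m$ is $m$-regionally proximal if for each $\varepsilon>0$ there exist $x_1',\dots,x_m'\in X$ with $d(x_i,x_i')<\varepsilon$ for all $i$, and $g\in G$ with $d(gx_i',gx_j')<\varepsilon$ for all $i,j$; $Q_m(X,G)$ is the set of such tuples. For nonempty open $U,V\subset X$, $N(U,V)=\{g\in G: U\cap gV\neq\emptyset\}$. *)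

theory Defs
  imports "HOL-Analysis.Analysis"
begin

text \<open>A continuous action of a topological group (written additively, class
  topological_group_add; not necessarily commutative) on a compact subset X
  of a metric space.\<close>
definition continuous_action ::
  "('g::topological_group_add \<Rightarrow> 'a::metric_space \<Rightarrow> 'a) \<Rightarrow> 'a set \<Rightarrow> bool" where
  "continuous_action act X \<longleftrightarrow>
     (\<forall>g. \<forall>x\<in>X. act g x \<in> X) \<and>
     (\<forall>x\<in>X. act 0 x = x) \<and>
     (\<forall>g h. \<forall>x\<in>X. act (g + h) x = act g (act h x)) \<and>
     continuous_on (UNIV \<times> X) (\<lambda>(g, x). act g x)"

definition minimal_action ::
  "('g::topological_group_add \<Rightarrow> 'a::metric_space \<Rightarrow> 'a) \<Rightarrow> 'a set \<Rightarrow> bool" where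
  "minimal_action act X \<longleftrightarrow> (\<forall>x\<in>X. closure (range (\<lambda>g. act g x)) = X)"

definition Q_reg ::
  "nat \<Rightarrow> ('g \<Rightarrow> 'a::metric_space \<Rightarrow> 'a) \<Rightarrow> 'a set \<Rightarrow> (nat \<Rightarrow> 'a) set" where
  "Q_reg m act X = {x. (\<forall>i\<in>{1..m}. x i \<in> X) \<and>
     (\<forall>\<epsilon>>0. \<exists>x'. (\<forall>i\<in>{1..m}. x' i \<in> X \<and> dist (x i) (x' i) < \<epsilon>) \<and>
        (\<exists>g. \<forall>i\<in>{1..m}. \<forall>j\<in>{1..m}. dist (act g (x' i)) (act g (x' j)) < \<epsilon>))}"

definition N_set :: "('g \<Rightarrow> 'a \<Rightarrow> 'a) \<Rightarrow> 'a set \<Rightarrow> 'a set \<Rightarrow> 'g set" where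
  "N_set act U V = {g. U \<inter> act g ` V \<noteq> {}}"

end

theory Submission
  imports Defs
begin

theorem lemma5p4:
  fixes act :: "'g::topological_group_add \<Rightarrow> 'a::metric_space \<Rightarrow> 'a"
    and X :: "'a set" and m :: nat and x :: "nat \<Rightarrow> 'a" and U :: "nat \<Rightarrow> 'a set"
  assumes "locally_compact_space (euclidean :: 'g topology)"
    and "compact X"
    and "continuous_action act X"
    and "minimal_action act X"
    and "m \<ge> 2"
    and "x \<in> Q_reg m act X"
    and "\<And>i. i \<in> {1..m} \<Longrightarrow> openin (top_of_set X) (U i) \<and> x i \<in> U i"
  shows "(\<Inter>i\<in>{1..m}. N_set act (U 1) (U i)) \<noteq> {}"
proof -
  have inX: "\<And>g y. y \<in> X \<Longrightarrow> act g y \<in> X"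
    and add: "\<And>g h y. y \<in> X \<Longrightarrow> act (g + h) y = act g (act h y)"
    and cont: "continuous_on (UNIV \<times> X) (\<lambda>(g, x). act g x)"
    using assms(3) unfolding continuous_action_def by auto
  have contk: "continuous_on X (act k)" for k
  proof -
    have "continuous_on X (\<lambda>y. (k, y))" by (intro continuous_intros)
    moreover have "(\<lambda>y. (k, y)) ` X \<subseteq> UNIV \<times> X" by auto
    ultimately have "continuous_on X ((\<lambda>(g, x). act g x) \<circ> (\<lambda>y. (k, y)))"
      using continuous_on_compose continuous_on_subset cont by blast
    thus ?thesis by (simp add: o_def)
  qed
  have m1: "1 \<in> {1..m}" using assms(5) by auto
  obtain T1 where T1: "open T1" "U 1 = X \<inter> T1"
    using assms(7)[OF m1] by (meson openin_open)
  have x1: "x 1 \<in> U 1" using assms(7)[OF m1] by auto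
  define \<G> where "\<G> = {A. open A \<and> (\<exists>k. A \<inter> X = act k -` T1 \<inter> X)}"
  have cover: "X \<subseteq> \<Union>\<G>"
  proof
    fix y assume y: "y \<in> X"
    have "closure (range (\<lambda>g. act g y)) = X" using assms(4) y unfolding minimal_action_def by auto
    hence "T1 \<inter> closure (range (\<lambda>g. act g y)) \<noteq> {}" using T1 x1 by auto
    hence "T1 \<inter> range (\<lambda>g. act g y) \<noteq> {}" using T1(1) open_Int_closure_eq_empty by blast
    then obtain k where k: "act k y \<in> T1" by auto
    obtain A where A: "open A" "A \<inter> X = act k -` T1 \<inter> X"
      using contk[of k] T1(1) unfolding continuous_on_open_invariant by blast
    hence "A \<in> \<G>" unfolding \<G>_def by auto
    moreover have "y \<in> A" using A k y by auto
    ultimately show "y \<in> \<Union>\<G>" by auto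
  qed
  obtain e where e: "0 < e" "\<And>z. z \<in> X \<Longrightarrow> \<exists>G\<in>\<G>. ball z e \<subseteq> G"
    using Heine_Borel_lemma[OF assms(2) cover] unfolding \<G>_def by auto
  have "\<forall>i\<in>{1..m}. \<exists>r>0. \<forall>y\<in>X. dist y (x i) < r \<longrightarrow> y \<in> U i"
    using assms(7) unfolding openin_euclidean_subtopology_iff by blast
  then obtain r where r: "\<And>i. i\<in>{1..m} \<Longrightarrow> r i > 0 \<and> (\<forall>y\<in>X. dist y (x i) < r i \<longrightarrow> y \<in> U i)"
    by metis
  define \<epsilon> where "\<epsilon> = min e (Min (r ` {1..m}))"
  have "Min (r ` {1..m}) > 0" using r m1 by (subst Min_gr_iff) auto
  hence eps: "\<epsilon> > 0" using e(1) unfolding \<epsilon>_def by auto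
  have epsr: "\<epsilon> \<le> r i" if "i \<in> {1..m}" for i
    unfolding \<epsilon>_def using that by (meson Min_le finite_atLeastAtMost finite_imageI image_eqI min.coboundedI2 order_trans)
  obtain x' g where x': "\<And>i. i\<in>{1..m} \<Longrightarrow> x' i \<in> X \<and> dist (x i) (x' i) < \<epsilon>"
    and g: "\<And>i j. i\<in>{1..m} \<Longrightarrow> j\<in>{1..m} \<Longrightarrow> dist (act g (x' i)) (act g (x' j)) < \<epsilon>"
    using assms(6) eps unfolding Q_reg_def by blast
  have zX: "act g (x' 1) \<in> X" using x' m1 inX by auto
  then obtain G where G: "G \<in> \<G>" "ball (act g (x' 1)) e \<subseteq> G" using e(2) by blast
  then obtain k where k: "G \<inter> X = act k -` T1 \<inter> X" unfolding \<G>_def by auto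
  have "k + g \<in> N_set act (U 1) (U i)" if i: "i \<in> {1..m}" for i
  proof -
    have xi: "x' i \<in> X" using x' i by auto
    have "x' i \<in> U i" using r[OF i] x'[OF i] epsr[OF i] xi by (simp add: dist_commute)
    moreover have "act g (x' i) \<in> G"
      using G(2) g[OF m1 i] unfolding \<epsilon>_def by auto
    hence "act k (act g (x' i)) \<in> T1" using k inX[OF xi] by blast
    hence "act (k + g) (x' i) \<in> U 1" using T1 add[OF xi] inX xi by auto
    ultimately show ?thesis unfolding N_set_def by blast
  qed
  thus ?thesis by blast
qed

end
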